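(* Let $X$ and $Y$ be metric spaces, let $A \subseteq X$ be closed, and let $F: A \Rightarrow Y$ be a multi-valued function which is continuous at every point of $A$ (with $A$ carrying the restricted metric). Then there exists a multi-valued function $G: X \Rightarrow Y$ with $G(x)=F(x)$ for all $x\in A$ which is continuous at every point of $X$.
   Context: A multi-valued function $F: X \Rightarrow Y$ assigns to each $x$ a nonempty set $F(x)\subseteq Y$. For metric spaces $(X,p),(Y,d)$, $F$ is continuous at $x$ if there is some $y \in F(x)$ such that for every $\varepsilon>0$ there is $\delta>0$ such that for every $x' \in B_p(x,\delta)$ there is $y' \in F(x')$ with $d(y,y')<\varepsilon$. *)

theory Defs
  imports "HOL-Analysis.Analysis"
begin

definition mv_fun :: "'a set \<Rightarrow> ('a \<Rightarrow> 'b set) \<Rightarrow> bool" where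
  "mv_fun S F \<longleftrightarrow> (\<forall>x\<in>S. F x \<noteq> {})"

definition mv_continuous_at ::
  "'a::metric_space set \<Rightarrow> ('a \<Rightarrow> 'b::metric_space set) \<Rightarrow> 'a \<Rightarrow> bool" where
  "mv_continuous_at S F x \<longleftrightarrow>
     (\<exists>y\<in>F x. \<forall>\<epsilon>>0. \<exists>\<delta>>0. \<forall>x'\<in>S. dist x x' < \<delta> \<longrightarrow> (\<exists>y'\<in>F x'. dist y y' < \<epsilon>))"

end

theory Submission
  imports Defs
begin

theorem corollary2p4:
  fixes A :: "'a::metric_space set" and F :: "'a \<Rightarrow> 'b::metric_space set"
  assumes "closed A"
    and "mv_fun A F"
    and "\<forall>x\<in>A. mv_continuous_at A F x"
  shows "\<exists>G :: 'a \<Rightarrow> 'b set. mv_fun UNIV G \<and> (\<forall>x\<in>A. G x = F x)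
           \<and> (\<forall>x. mv_continuous_at UNIV G x)"
proof -
  define G where "G x = (if x \<in> A then F x else UNIV)" for x
  have "mv_fun UNIV G" using assms(2) by (auto simp: mv_fun_def G_def)
  moreover have "\<forall>x\<in>A. G x = F x" by (simp add: G_def)
  moreover have "mv_continuous_at UNIV G x" for x
  proof (cases "x \<in> A")
    case True
    then obtain y where y: "y \<in> F x"
      "\<forall>\<epsilon>>0. \<exists>\<delta>>0. \<forall>x'\<in>A. dist x x' < \<delta> \<longrightarrow> (\<exists>y'\<in>F x'. dist y y' < \<epsilon>)"
      using assms(3) by (auto simp: mv_continuous_at_def)
    show ?thesis unfolding mv_continuous_at_def
    proof (rule bexI[of _ y], intro allI impI)
      fix e :: real assume "e > 0"
      then obtain d where d: "d > 0" "\<forall>x'\<in>A. dist x x' < d \<longrightarrow> (\<exists>y'\<in>F x'. dist y y' < e)"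
        using y(2) by blast
      show "\<exists>\<delta>>0. \<forall>x'\<in>UNIV. dist x x' < \<delta> \<longrightarrow> (\<exists>y'\<in>G x'. dist y y' < e)"
        using d \<open>e > 0\<close> by (intro exI[of _ d]) (auto simp: G_def intro: exI[of _ y])
    next
      show "y \<in> G x" using True y(1) by (simp add: G_def)
    qed
  next
    case False
    have "open (- A)" using assms(1) by auto
    then obtain d where d: "d > 0" "ball x d \<subseteq> - A" using False
      by (meson ComplI open_contains_ball)
    fix y0 :: 'b
    show ?thesis unfolding mv_continuous_at_def
    proof (rule bexI[of _ y0], intro allI impI)
      fix e :: real assume "e > 0"
      show "\<exists>\<delta>>0. \<forall>x'\<in>UNIV. dist x x' < \<delta> \<longrightarrow> (\<exists>y'\<in>G x'. dist y0 y' < e)"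
      proof (intro exI[of _ d] conjI ballI impI)
        fix x' assume "dist x x' < d"
        then have "x' \<notin> A" using d by auto
        then show "\<exists>y'\<in>G x'. dist y0 y' < e" using \<open>e>0\<close>
          by (intro bexI[of _ y0]) (auto simp: G_def)
      qed (use d in auto)
    next
      show "y0 \<in> G x" using False by (simp add: G_def)
    qed
  qed
  ultimately show ?thesis by blast
qed

end
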